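(* Let $\mathcal{D}_D$ (the Defender data) and $\mathcal{D}_R$ (the Reserved data) be finite, nonempty, disjoint sets of samples, and let $\ell$ be the loss function used to train the Defender model, assumed bounded with $0 \le \ell(x) \le 1$ for all $x$. Let $e_R = \mathbb{E}_{u \sim \mathcal{D}_R}[\ell(u)]$ and $e_D = \mathbb{E}_{u \sim \mathcal{D}_D}[\ell(u)]$, with $u$ drawn uniformly. If $e_R > e_D$, then there is an LTU attack strategy whose LTU membership classification accuracy satisfies $$A_{ltu} \ge \tfrac{1}{2} + \tfrac{1}{2}(e_R - e_D).$$
   Context: An LTU (Leave-Two-Unlabeled) round is as follows: a Defender sample $d$ is drawn uniformly from $\mathcal{D}_D$ and a Reserved sample $r$ is drawn uniformly from $\mathcal{D}_R$, independently; the two samples are presented to the attacker as a pair $(u_1,u_2)$ in uniformly random order, with their membership labels hidden (exactly one of $u_1,u_2$ belongs to $\mathcal{D}_D$). The attacker (which may evaluate $\ell$ and may use its own independent randomness) must predict which of $u_1,u_2$ belongs to $\mathcal{D}_D$. The LTU membership classification accuracy $A_{ltu}$ is the probability (over the draw of $d$, $r$, the ordering, and the attacker's randomness) that this prediction is correct. *)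

theory Defs
  imports Complex_Main
begin

definition avg_loss :: "('a \<Rightarrow> real) \<Rightarrow> 'a set \<Rightarrow> real" where
  "avg_loss l S = (\<Sum>u\<in>S. l u) / real (card S)"

text \<open>An LTU attack strategy: given the pair of losses (l u1, l u2) of the presented
  pair (u1,u2), it outputs the probability (its own randomness) with which it predicts
  that u1 is the Defender sample; otherwise it predicts u2.\<close>
definition ltu_strategy :: "(real \<Rightarrow> real \<Rightarrow> real) \<Rightarrow> bool" where
  "ltu_strategy s \<longleftrightarrow> (\<forall>a b. 0 \<le> s a b \<and> s a b \<le> 1)"

text \<open>LTU accuracy: d uniform in DD, r uniform in DR, independent; order uniformly
  random (each with probability 1/2); correct iff the Defender sample is chosen.\<close>
definition ltu_accuracy ::
  "('a \<Rightarrow> real) \<Rightarrow> 'a set \<Rightarrow> 'a set \<Rightarrow> (real \<Rightarrow> real \<Rightarrow> real) \<Rightarrow> real" where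
  "ltu_accuracy l DD DR s =
     (\<Sum>d\<in>DD. \<Sum>r\<in>DR.
        (1/2) * s (l d) (l r) + (1/2) * (1 - s (l r) (l d)))
     / (real (card DD) * real (card DR))"

end

theory Submission
  imports Defs
begin

theorem theorem2:
  fixes l :: "'a \<Rightarrow> real" and DD DR :: "'a set"
  assumes "finite DD" and "finite DR" and "DD \<noteq> {}" and "DR \<noteq> {}"
    and "DD \<inter> DR = {}"
    and "\<And>x. 0 \<le> l x \<and> l x \<le> 1"
    and "avg_loss l DR > avg_loss l DD"
  shows "\<exists>s. ltu_strategy s \<and>
           ltu_accuracy l DD DR s \<ge> 1/2 + (1/2) * (avg_loss l DR - avg_loss l DD)"
proof -
  define s where "s = (\<lambda>a b::real. max 0 (min 1 ((1 + b - a) / 2)))"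
  have st: "ltu_strategy s" unfolding ltu_strategy_def s_def by auto
  have key: "(1/2) * s (l d) (l r) + (1/2) * (1 - s (l r) (l d)) = (1 + l r - l d) / 2" for d r
  proof -
    have a: "s (l d) (l r) = (1 + l r - l d) / 2" "s (l r) (l d) = (1 + l d - l r) / 2"
      using assms(6)[of d] assms(6)[of r] unfolding s_def by auto
    show ?thesis unfolding a by (simp add: field_simps)
  qed
  let ?m = "real (card DD)" and ?n = "real (card DR)"
  have m: "?m > 0" and n: "?n > 0" using assms(1-4) by (auto simp: card_gt_0_iff)
  have "(\<Sum>d\<in>DD. \<Sum>r\<in>DR. (1/2) * s (l d) (l r) + (1/2) * (1 - s (l r) (l d)))
      = (\<Sum>d\<in>DD. \<Sum>r\<in>DR. (1/2) + l r / 2 - l d / 2)"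
    by (intro sum.cong refl, subst key, simp add: field_simps)
  also have "\<dots> = (\<Sum>d\<in>DD. ?n / 2 + (\<Sum>r\<in>DR. l r) / 2 - ?n * l d / 2)"
    by (simp add: sum_subtractf sum.distrib sum_divide_distrib)
  also have "\<dots> = ?m * ?n / 2 + ?m * (\<Sum>r\<in>DR. l r) / 2 - ?n * (\<Sum>d\<in>DD. l d) / 2"
    by (simp add: sum_subtractf sum.distrib sum_divide_distrib[symmetric] sum_distrib_left[symmetric] algebra_simps sum_distrib_right)
  finally have S: "(\<Sum>d\<in>DD. \<Sum>r\<in>DR. (1/2) * s (l d) (l r) + (1/2) * (1 - s (l r) (l d)))
      = ?m * ?n / 2 + ?m * (\<Sum>r\<in>DR. l r) / 2 - ?n * (\<Sum>d\<in>DD. l d) / 2" .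
  have "ltu_accuracy l DD DR s = 1/2 + (1/2) * (avg_loss l DR - avg_loss l DD)"
    unfolding ltu_accuracy_def avg_loss_def S using m n
    by (simp add: field_simps)
  thus ?thesis using st by auto
qed

end
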